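(* Let $S\subset\mathbb{R}^2$ be a finite point set and $I=\{p_1,\dots,p_n\}$ a finite point set disjoint from $S$, with $S\cup I$ in general position. Let $R\subseteq S$ be any subset containing every $q\in S$ such that some $p_i\in I$ conflicts (with respect to $S$) with $V_q(S)$. Let $U_R$ be the set of Voronoi edge bends and Voronoi vertices of $\mathrm{Vor}_Q(R)$ that conflict (with respect to $R$) with at least one of $p_1,\dots,p_n$, and for each $i$ let $V_S|_{p_i}$ be the set of Voronoi edge bends and Voronoi vertices of $\mathrm{Vor}_Q(S)$ that conflict (with respect to $S$) with $p_i$. Then $U_R\subseteq\bigcup_{i=1}^n V_S|_{p_i}$.
   Context: Let $Q\subset\mathbb{R}^2$ be a convex polygon with a constant number of vertices containing the origin in its interior; $d_Q(x,y)=\min\{\lambda\ge 0: y\in\lambda Q+x\}$; $Q^*=\{-x:x\in Q\}$. For a finite set $Y$ and $p\in Y$, $V_p(Y)=\{x: d_Q(p,x)\le d_Q(q,x)\ \forall q\in Y\}$ and $\mathrm{Vor}_Q(Y)$ is the resulting subdivision. Voronoi edges are polygonal curves; their interior vertices are Voronoi edge bends. For $x\in\mathbb{R}^2$, the largest homothetic copy $\lambda Q^*+x$ ($\lambda\ge0$) of $Q^*$ centered at $x$ whose interior avoids $Y$ is denoted $Q^*_x$ (w.r.t. $Y$); a point $p$ conflicts with $x$ w.r.t. $Y$ if $p\in Q^*_x$, and conflicts with a set if it conflicts with some point of it. General position means: no two sides of $Q$ are parallel; no line through two of the points is parallel to a side of $Q$; no four points lie on the boundary of a homothetic copy of $Q^*$.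 *)

theory Defs
  imports "HOL-Analysis.Analysis"
begin

type_synonym pt = "real ^ 2"

definition convex_polygon_shape :: "pt set \<Rightarrow> bool" where
  "convex_polygon_shape Q \<longleftrightarrow> polytope Q \<and> 0 \<in> interior Q"

definition homothet :: "pt set \<Rightarrow> real \<Rightarrow> pt \<Rightarrow> pt set" where
  "homothet Q lam c = (\<lambda>y. c + lam *\<^sub>R y) ` Q"

definition dQ :: "pt set \<Rightarrow> pt \<Rightarrow> pt \<Rightarrow> real" where
  "dQ Q x y = Inf {lam. lam \<ge> 0 \<and> y \<in> homothet Q lam x}"

definition Qstar :: "pt set \<Rightarrow> pt set" where
  "Qstar Q = uminus ` Q"

definition vcell :: "pt set \<Rightarrow> pt set \<Rightarrow> pt \<Rightarrow> pt set" where
  "vcell Q Y p = {x. \<forall>q\<in>Y. dQ Q p x \<le> dQ Q q x}"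

definition sites_at :: "pt set \<Rightarrow> pt set \<Rightarrow> pt \<Rightarrow> pt set" where
  "sites_at Q Y x = {p \<in> Y. x \<in> vcell Q Y p}"

definition voronoi_vertex :: "pt set \<Rightarrow> pt set \<Rightarrow> pt \<Rightarrow> bool" where
  "voronoi_vertex Q Y x \<longleftrightarrow> card (sites_at Q Y x) \<ge> 3"

text \<open>Voronoi edge bend: a point of the Voronoi edge between exactly two regions
  V_p, V_q at which the polygonal curve V_p \<inter> V_q is not locally a straight line
  (i.e. an interior vertex of the polygonal Voronoi edge).\<close>
definition voronoi_edge_bend :: "pt set \<Rightarrow> pt set \<Rightarrow> pt \<Rightarrow> bool" where
  "voronoi_edge_bend Q Y x \<longleftrightarrow>
     (\<exists>p q. p \<noteq> q \<and> sites_at Q Y x = {p, q} \<and>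
        \<not> (\<exists>v e. v \<noteq> 0 \<and> e > 0 \<and>
              vcell Q Y p \<inter> vcell Q Y q \<inter> ball x e
                = {x + t *\<^sub>R v | t. True} \<inter> ball x e))"

definition vor_features :: "pt set \<Rightarrow> pt set \<Rightarrow> pt set" where
  "vor_features Q Y = {x. voronoi_vertex Q Y x \<or> voronoi_edge_bend Q Y x}"

definition Qstar_at :: "pt set \<Rightarrow> pt set \<Rightarrow> pt \<Rightarrow> pt set" where
  "Qstar_at Q Y x = homothet (Qstar Q)
      (Sup {lam. lam \<ge> 0 \<and> interior (homothet (Qstar Q) lam x) \<inter> Y = {}}) x"

definition conflicts :: "pt set \<Rightarrow> pt set \<Rightarrow> pt \<Rightarrow> pt \<Rightarrow> bool" where
  "conflicts Q Y p x \<longleftrightarrow> p \<in> Qstar_at Q Y x"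

definition conflicts_set :: "pt set \<Rightarrow> pt set \<Rightarrow> pt \<Rightarrow> pt set \<Rightarrow> bool" where
  "conflicts_set Q Y p A \<longleftrightarrow> (\<exists>x\<in>A. conflicts Q Y p x)"

definition sides :: "pt set \<Rightarrow> pt set set" where
  "sides Q = {F. F face_of Q \<and> aff_dim F = 1}"

definition parallel_to :: "pt \<Rightarrow> pt set \<Rightarrow> bool" where
  "parallel_to u F \<longleftrightarrow> (\<forall>a\<in>F. \<forall>b\<in>F. collinear {0, u, b - a})"

definition general_position :: "pt set \<Rightarrow> pt set \<Rightarrow> bool" where
  "general_position Q P \<longleftrightarrow>
     (\<forall>F\<in>sides Q. \<forall>G\<in>sides Q. F \<noteq> G \<longrightarrow>
        \<not> (\<forall>a\<in>G. \<forall>b\<in>G. parallel_to (b - a) F)) \<and>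
     (\<forall>p\<in>P. \<forall>q\<in>P. p \<noteq> q \<longrightarrow> (\<forall>F\<in>sides Q. \<not> parallel_to (q - p) F)) \<and>
     \<not> (\<exists>lam c A. lam > 0 \<and> A \<subseteq> P \<and> card A = 4 \<and>
          A \<subseteq> frontier (homothet (Qstar Q) lam c))"

end

theory Submission
  imports Defs
begin


lemma hom_mem: "b \<in> homothet Q l a \<longleftrightarrow> (\<exists>q\<in>Q. b = a + l *\<^sub>R q)"
  by (auto simp: homothet_def)

locale shape =
  fixes Q :: "pt set"
  assumes cvx: "convex Q" and cpt: "compact Q" and zi: "0 \<in> interior Q"
begin

lemma zQ: "0 \<in> Q" using zi interior_subset by blast

lemma rball: obtains r where "r > 0" "cball 0 r \<subseteq> Q"
  using zi mem_interior_cball by blast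

lemma upclosed:
  assumes "b \<in> homothet Q l a" "0 \<le> l" "l \<le> m"
  shows "b \<in> homothet Q m a"
proof -
  from assms obtain q where q: "q \<in> Q" "b = a + l *\<^sub>R q" by (auto simp: hom_mem)
  show ?thesis
  proof (cases "l = 0")
    case True
    then show ?thesis using q zQ by (auto simp: hom_mem intro!: bexI[of _ 0])
  next
    case False
    then have lp: "l > 0" "m > 0" using assms by auto
    have "(l/m) *\<^sub>R q + (1 - l/m) *\<^sub>R 0 \<in> Q"
      using cvx q(1) zQ assms lp by (intro convexD) (auto simp: field_simps)
    moreover have "b = a + m *\<^sub>R ((l/m) *\<^sub>R q + (1 - l/m) *\<^sub>R 0)"
      using q lp by simp
    ultimately show ?thesis unfolding hom_mem by blast
  qed
qed

lemma Aset_ne: "\<exists>l\<ge>0. b \<in> homothet Q l a"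
proof -
  obtain r where r: "r > 0" "cball 0 r \<subseteq> Q" by (rule rball)
  define l where "l = norm (b - a) / r + 1"
  have lp: "l > 0" using r by (simp add: l_def add_nonneg_pos)
  have "norm ((1/l) *\<^sub>R (b - a)) \<le> r"
  proof -
    have "norm ((1/l) *\<^sub>R (b - a)) = norm (b - a) / l" using lp by simp
    also have "\<dots> \<le> r" using r lp by (simp add: l_def field_simps)
    finally show ?thesis .
  qed
  then have "(1/l) *\<^sub>R (b - a) \<in> Q" using r by auto
  moreover have "b = a + l *\<^sub>R ((1/l) *\<^sub>R (b - a))" using lp by simp
  ultimately have "b \<in> homothet Q l a" unfolding hom_mem by blast
  then show ?thesis using lp by (intro exI[of _ l]) auto
qed

lemma dQ_ge0: "dQ Q a b \<ge> 0"
  unfolding dQ_def using Aset_ne[of b a] by (intro cInf_greatest) auto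

lemma dQ_attained: "b \<in> homothet Q (dQ Q a b) a"
proof -
  define A where "A = {lam. lam \<ge> 0 \<and> b \<in> homothet Q lam a}"
  define m where "m = Inf A"
  have Ane: "A \<noteq> {}" using Aset_ne[of b a] by (auto simp: A_def)
  have bdd: "bdd_below A" by (auto simp: A_def bdd_below_def)
  have "\<forall>n. \<exists>l. l \<in> A \<and> l < m + 1 / real (Suc n)"
  proof
    fix n
    have "m < m + 1 / real (Suc n)" by simp
    then show "\<exists>l. l \<in> A \<and> l < m + 1 / real (Suc n)"
      using cInf_less_iff[OF Ane bdd] unfolding m_def by blast
  qed
  then obtain L where L: "\<And>n. L n \<in> A" "\<And>n. L n < m + 1 / real (Suc n)" by metis
  have Lm: "\<And>n. m \<le> L n" using L(1) bdd unfolding m_def by (intro cInf_lower) auto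
  have "\<forall>n. \<exists>q. q \<in> Q \<and> b = a + L n *\<^sub>R q" using L(1) by (auto simp: A_def hom_mem)
  then obtain q where q: "\<And>n. q n \<in> Q" "\<And>n. b = a + L n *\<^sub>R q n" by metis
  obtain qs rr where qs: "qs \<in> Q" "strict_mono rr" "(q \<circ> rr) \<longlonglongrightarrow> qs"
    using cpt q(1) unfolding compact_def by metis
  have Llim: "L \<longlonglongrightarrow> m"
  proof (rule real_tendsto_sandwich[of "\<lambda>n. m" _ _ "\<lambda>n. m + 1 / real (Suc n)"])
    show "\<forall>\<^sub>F n in sequentially. m \<le> L n" using Lm by simp
    show "\<forall>\<^sub>F n in sequentially. L n \<le> m + 1 / real (Suc n)" using L(2) by (intro always_eventually allI less_imp_le) auto
    show "(\<lambda>n. m) \<longlonglongrightarrow> m" by simp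
    have "(\<lambda>n. m + inverse (real (Suc n))) \<longlonglongrightarrow> m + 0"
      by (intro tendsto_intros LIMSEQ_inverse_real_of_nat)
    then show "(\<lambda>n. m + 1 / real (Suc n)) \<longlonglongrightarrow> m" by (simp add: inverse_eq_divide)
  qed
  have "(\<lambda>n. a + L (rr n) *\<^sub>R (q \<circ> rr) n) \<longlonglongrightarrow> a + m *\<^sub>R qs"
    using LIMSEQ_subseq_LIMSEQ[OF Llim qs(2)] qs(3)
    by (intro tendsto_intros) (auto simp: o_def)
  moreover have "(\<lambda>n. a + L (rr n) *\<^sub>R (q \<circ> rr) n) = (\<lambda>n. b)" using q(2) by (auto simp: o_def)
  ultimately have "b = a + m *\<^sub>R qs" using LIMSEQ_const_iff by metis
  then show ?thesis using qs(1) unfolding dQ_def m_def A_def by (auto simp: hom_mem)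
qed

lemma K: assumes "0 \<le> mu" shows "b \<in> homothet Q mu a \<longleftrightarrow> dQ Q a b \<le> mu"
proof
  assume "b \<in> homothet Q mu a"
  then show "dQ Q a b \<le> mu" unfolding dQ_def using assms
    by (intro cInf_lower) (auto simp: bdd_below_def)
next
  assume "dQ Q a b \<le> mu"
  then show "b \<in> homothet Q mu a" using upclosed[OF dQ_attained dQ_ge0] by blast
qed

definition N :: "pt \<Rightarrow> real" where "N v = dQ Q 0 v"

lemma N_ge0: "N v \<ge> 0" by (simp add: N_def dQ_ge0)

lemma hom_shift: "b \<in> homothet Q l a \<longleftrightarrow> b - a \<in> homothet Q l 0"
  by (auto simp: hom_mem algebra_simps)

lemma NK: "0 \<le> mu \<Longrightarrow> v \<in> homothet Q mu 0 \<longleftrightarrow> N v \<le> mu"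
  by (simp add: K N_def)

lemma dQ_shift: "dQ Q a b = N (b - a)"
proof -
  have "\<And>mu. 0 \<le> mu \<Longrightarrow> dQ Q a b \<le> mu \<longleftrightarrow> N (b - a) \<le> mu"
    using K NK hom_shift by metis
  then show ?thesis using dQ_ge0[of a b] N_ge0[of "b - a"]
    by (meson antisym order_refl)
qed

lemma N_in: "v \<in> homothet Q (N v) 0"
  using NK[OF N_ge0] by simp

lemma hom0: "v \<in> homothet Q mu 0 \<longleftrightarrow> (\<exists>q\<in>Q. v = mu *\<^sub>R q)"
  by (simp add: hom_mem)

lemma N_zero_iff: "N v = 0 \<longleftrightarrow> v = 0"
proof
  assume "N v = 0"
  then show "v = 0" using N_in[of v] by (auto simp: hom0)
next
  assume "v = 0"
  then have "v \<in> homothet Q 0 0" using zQ by (auto simp: hom0)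
  then show "N v = 0" using NK[of 0 v] N_ge0[of v] by simp
qed

lemma N0[simp]: "N 0 = 0" using N_zero_iff by simp

lemma N_scale: assumes "t \<ge> 0" shows "N (t *\<^sub>R v) = t * N v"
proof (cases "t = 0")
  case True then show ?thesis using N_zero_iff by simp
next
  case False
  then have tp: "t > 0" using assms by simp
  obtain q where q: "q \<in> Q" "v = N v *\<^sub>R q" using N_in[of v] by (auto simp: hom0)
  have "t *\<^sub>R v = (t * N v) *\<^sub>R q" using q(2) by (metis scaleR_scaleR)
  then have "t *\<^sub>R v \<in> homothet Q (t * N v) 0" using q(1) unfolding hom0 by blast
  then have 1: "N (t *\<^sub>R v) \<le> t * N v" using NK tp N_ge0 by simp
  obtain q' where q': "q' \<in> Q" "t *\<^sub>R v = N (t *\<^sub>R v) *\<^sub>R q'" using N_in[of "t *\<^sub>R v"] by (auto simp: hom0)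
  have "v = (1/t) *\<^sub>R (t *\<^sub>R v)" using tp by simp
  also have "\<dots> = (1/t) *\<^sub>R (N (t *\<^sub>R v) *\<^sub>R q')" by (rule arg_cong[OF q'(2)])
  also have "\<dots> = (N (t *\<^sub>R v) / t) *\<^sub>R q'" by simp
  finally have "v = (N (t *\<^sub>R v) / t) *\<^sub>R q'" .
  then have "v \<in> homothet Q (N (t *\<^sub>R v) / t) 0" using q' by (auto simp: hom0)
  then have "N v \<le> N (t *\<^sub>R v) / t" using NK tp N_ge0 by simp
  then have "t * N v \<le> N (t *\<^sub>R v)" using tp by (simp add: field_simps)
  with 1 show ?thesis by simp
qed

lemma N_triangle: "N (u + w) \<le> N u + N w"
proof -
  obtain q1 where q1: "q1 \<in> Q" "u = N u *\<^sub>R q1" using N_in[of u] by (auto simp: hom0)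
  obtain q2 where q2: "q2 \<in> Q" "w = N w *\<^sub>R q2" using N_in[of w] by (auto simp: hom0)
  have "u + w \<in> homothet Q (N u + N w) 0"
  proof (cases "N u + N w = 0")
    case True
    then have "N u = 0" "N w = 0" using N_ge0[of u] N_ge0[of w] by auto
    then show ?thesis using zQ by (auto simp: N_zero_iff hom0 intro!: bexI[of _ 0])
  next
    case False
    define s where "s = N u + N w"
    have sp: "s > 0" using False N_ge0[of u] N_ge0[of w] by (simp add: s_def)
    have sum1: "N u / s + N w / s = 1" using sp by (simp add: s_def add_divide_distrib[symmetric])
    have "(N u / s) *\<^sub>R q1 + (N w / s) *\<^sub>R q2 \<in> Q"
      using cvx q1(1) q2(1) sp N_ge0[of u] N_ge0[of w] sum1
      by (intro convexD[OF cvx q1(1) q2(1) _ _ sum1] divide_nonneg_pos) auto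
    moreover have "u + w = s *\<^sub>R ((N u / s) *\<^sub>R q1 + (N w / s) *\<^sub>R q2)"
      using q1 q2 sp by (simp add: scaleR_add_right)
    ultimately show ?thesis unfolding s_def hom0 by blast
  qed
  then show ?thesis using NK N_ge0[of u] N_ge0[of w] by simp
qed

lemma N_bound: obtains r where "r > 0" "\<And>v. N v \<le> norm v / r"
proof -
  obtain r where r: "r > 0" "cball 0 r \<subseteq> Q" by (rule rball)
  have "N v \<le> norm v / r" for v
  proof (cases "v = 0")
    case True then show ?thesis using N_zero_iff by simp
  next
    case False
    have "(r / norm v) *\<^sub>R v \<in> Q" using r False by (intro subsetD[OF r(2)]) simp
    moreover have "v = (norm v / r) *\<^sub>R ((r / norm v) *\<^sub>R v)" using r False by simp
    ultimately have "v \<in> homothet Q (norm v / r) 0" unfolding hom0 by blast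
    then show ?thesis using NK r by simp
  qed
  then show ?thesis using r by (intro that[of r]) auto
qed

lemma N_lipschitz: obtains C where "C \<ge> 0" "\<And>u w. dist (N u) (N w) \<le> C * dist u w"
proof -
  obtain r where r: "r > 0" "\<And>v. N v \<le> norm v / r" using N_bound by blast
  have "dist (N u) (N w) \<le> (1/r) * dist u w" for u w
  proof -
    have "N u \<le> N w + N (u - w)" using N_triangle[of w "u - w"] by simp
    moreover have "N w \<le> N u + N (w - u)" using N_triangle[of u "w - u"] by simp
    moreover have "N (u - w) \<le> dist u w / r" using r(2) by (simp add: dist_norm)
    moreover have "N (w - u) \<le> dist u w / r" using r(2)[of "w - u"] by (simp add: dist_norm norm_minus_commute)
    ultimately show ?thesis by (simp add: dist_real_def abs_le_iff)
  qed
  then show ?thesis using r by (intro that[of "1/r"]) auto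
qed

lemma N_cont: "continuous_on UNIV N"
proof -
  obtain C where C: "C \<ge> 0" "\<And>u w. dist (N u) (N w) \<le> C * dist u w" using N_lipschitz by blast
  have "C-lipschitz_on UNIV N" using C by (auto simp: lipschitz_on_def)
  then show ?thesis by (rule lipschitz_on_continuous_on)
qed

lemma dQ_cont: "continuous_on U (\<lambda>y. dQ Q a y)"
  unfolding dQ_shift
  by (rule continuous_on_compose2[OF N_cont]) (auto intro!: continuous_intros)

lemma inQ_iff: "z \<in> Q \<longleftrightarrow> N z \<le> 1"
proof -
  have "homothet Q 1 0 = Q" by (auto simp: homothet_def)
  then show ?thesis using NK[of 1 z] by simp
qed

lemma interior_N: assumes "z \<in> interior Q" shows "N z < 1"
proof (cases "z = 0")
  case True then show ?thesis using N_zero_iff by simp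
next
  case False
  obtain e where e: "e > 0" "cball z e \<subseteq> Q" using assms mem_interior_cball by blast
  define c where "c = e / norm z"
  have cp: "c > 0" using e False by (simp add: c_def)
  have "z - (1 + c) *\<^sub>R z = - (c *\<^sub>R z)" by (simp add: algebra_simps)
  then have "dist z ((1 + c) *\<^sub>R z) = norm (c *\<^sub>R z)" by (simp only: dist_norm norm_minus_cancel)
  then have "dist z ((1 + c) *\<^sub>R z) = c * norm z" using cp by simp
  then have "dist z ((1 + c) *\<^sub>R z) = e" using False by (simp add: c_def)
  then have "(1 + c) *\<^sub>R z \<in> Q" using e by auto
  then have "(1 + c) * N z \<le> 1" using inQ_iff N_scale[of "1 + c" z] cp by simp
  show ?thesis
  proof (rule ccontr)
    assume "\<not> N z < 1"
    then have "(1 + c) * 1 \<le> (1 + c) * N z" using cp by (intro mult_left_mono) auto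
    then have "(1 + c) * 1 \<le> (1::real)" using \<open>(1 + c) * N z \<le> 1\<close> by (rule order_trans)
    then show False using cp by simp
  qed
qed

end



context shape begin

definition D :: "pt set \<Rightarrow> pt \<Rightarrow> real" where
  "D Y x = Min ((\<lambda>y. dQ Q y x) ` Y)"

lemma D_le: "finite Y \<Longrightarrow> y \<in> Y \<Longrightarrow> D Y x \<le> dQ Q y x"
  unfolding D_def by (rule Min_le) auto

lemma D_att: "finite Y \<Longrightarrow> Y \<noteq> {} \<Longrightarrow> \<exists>y\<in>Y. dQ Q y x = D Y x"
proof -
  assume "finite Y" "Y \<noteq> {}"
  then have "D Y x \<in> (\<lambda>y. dQ Q y x) ` Y" unfolding D_def by (intro Min_in) auto
  then show ?thesis by auto
qed

lemma D_ge0: "finite Y \<Longrightarrow> Y \<noteq> {} \<Longrightarrow> D Y x \<ge> 0"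
  using D_att dQ_ge0 by metis

lemma vcell_iff: "finite Y \<Longrightarrow> Y \<noteq> {} \<Longrightarrow> x \<in> vcell Q Y q \<longleftrightarrow> dQ Q q x \<le> D Y x"
  unfolding vcell_def D_def by auto

lemma D_cont: "finite Y \<Longrightarrow> Y \<noteq> {} \<Longrightarrow> continuous_on U (D Y)"
  unfolding D_def
proof (induction Y rule: finite_ne_induct)
  case (singleton y) then show ?case by (simp add: dQ_cont)
next
  case (insert y F)
  have "(\<lambda>x. Min ((\<lambda>y. dQ Q y x) ` insert y F)) = (\<lambda>x. min (dQ Q y x) (Min ((\<lambda>y. dQ Q y x) ` F)))"
    using insert by (auto simp: Min_insert)
  then show ?case using insert dQ_cont by (auto intro!: continuous_on_min)
qed

lemma dQ_self: "dQ Q z x = 0 \<longleftrightarrow> z = x"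
  by (auto simp: dQ_shift N_zero_iff)

lemma hstar: "0 \<le> l \<Longrightarrow> homothet (Qstar Q) l x = {z. dQ Q z x \<le> l}"
proof -
  assume l: "0 \<le> l"
  have "z \<in> homothet (Qstar Q) l x \<longleftrightarrow> x \<in> homothet Q l z" for z
  proof -
    have "z \<in> homothet (Qstar Q) l x \<longleftrightarrow> (\<exists>q\<in>Q. z = x + l *\<^sub>R (- q))"
      unfolding homothet_def Qstar_def by (auto simp: image_iff)
    also have "\<dots> \<longleftrightarrow> (\<exists>q\<in>Q. x = z + l *\<^sub>R q)"
      by (auto simp: algebra_simps)
    finally show ?thesis by (simp add: hom_mem)
  qed
  then show ?thesis using K[OF l] by auto
qed

lemma open_lt: "open {z. dQ Q z x < l}"
proof -
  have c: "continuous_on UNIV (\<lambda>z. dQ Q z x)"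
    unfolding dQ_shift
    by (rule continuous_on_compose2[OF N_cont]) (auto intro!: continuous_intros)
  show ?thesis by (rule open_Collect_less[OF c]) simp
qed

lemma Qstar_at_eq:
  assumes "finite Y" "Y \<noteq> {}"
  shows "Qstar_at Q Y x = {z. dQ Q z x \<le> D Y x}"
proof -
  define L where "L = {lam. lam \<ge> 0 \<and> interior (homothet (Qstar Q) lam x) \<inter> Y = {}}"
  have D0: "D Y x \<ge> 0" using D_ge0 assms by blast
  have DL: "D Y x \<in> L"
  proof -
    have "y \<notin> interior (homothet (Qstar Q) (D Y x) x)" if y: "y \<in> Y" for y
    proof
      assume yi: "y \<in> interior (homothet (Qstar Q) (D Y x) x)"
      have Dy: "D Y x \<le> dQ Q y x" using D_le assms y by blast
      show False
      proof (cases "y = x")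
        case True
        then have "D Y x = 0" using Dy D0 dQ_self[of x x] by simp
        then have "homothet (Qstar Q) (D Y x) x = {x}" using hstar[of 0 x] dQ_self[of _ x] dQ_ge0[of _ x] by (auto intro: antisym eq_refl)
        then show False using yi by simp
      next
        case False
        obtain e where e: "e > 0" "ball y e \<subseteq> homothet (Qstar Q) (D Y x) x"
          using yi mem_interior by blast
        define eps where "eps = e / (2 * norm (y - x))"
        have np: "norm (y - x) > 0" using False by simp
        have ep: "eps > 0" using e np by (simp add: eps_def)
        define z where "z = y + eps *\<^sub>R (y - x)"
        have "dist y z = eps * norm (y - x)" using ep by (simp add: z_def dist_norm)
        also have "\<dots> = e / 2" using np by (simp add: eps_def)
        finally have "z \<in> ball y e" using e by simp
        then have "dQ Q z x \<le> D Y x" using e hstar[OF D0] by auto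
        moreover have "x - z = (1 + eps) *\<^sub>R (x - y)" by (simp add: z_def algebra_simps)
        then have "dQ Q z x = (1 + eps) * dQ Q y x"
          using ep by (simp add: dQ_shift N_scale)
        ultimately have "(1 + eps) * dQ Q y x \<le> dQ Q y x" using Dy by linarith
        then have "eps * dQ Q y x \<le> 0" by (simp add: algebra_simps)
        then have "dQ Q y x = 0" using ep dQ_ge0[of y x]
          by (simp add: mult_le_0_iff)
        then show False using False dQ_self by simp
      qed
    qed
    then show ?thesis using D0 by (auto simp: L_def)
  qed
  have Lle: "l \<le> D Y x" if l: "l \<in> L" for l
  proof (rule ccontr)
    assume "\<not> l \<le> D Y x"
    then have lt: "D Y x < l" by simp
    obtain y0 where y0: "y0 \<in> Y" "dQ Q y0 x = D Y x" using D_att assms by blast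
    have "{z. dQ Q z x < l} \<subseteq> homothet (Qstar Q) l x" using hstar[of l x] lt D0 by auto
    then have "{z. dQ Q z x < l} \<subseteq> interior (homothet (Qstar Q) l x)"
      using open_lt by (rule interior_maximal)
    then have "y0 \<in> interior (homothet (Qstar Q) l x)" using y0 lt by auto
    then show False using l y0 by (auto simp: L_def)
  qed
  have "Sup L = D Y x" by (rule cSup_eq_maximum[OF DL Lle])
  then show ?thesis unfolding Qstar_at_def L_def[symmetric] using hstar[OF D0] by simp
qed

lemma conflicts_iff: "finite Y \<Longrightarrow> Y \<noteq> {} \<Longrightarrow> conflicts Q Y p x \<longleftrightarrow> dQ Q p x \<le> D Y x"
  by (simp add: conflicts_def Qstar_at_eq)

end



context shape begin

lemma face_par:
  assumes u: "u \<in> Q" and w: "w \<in> Q" and Nz: "N z = 1"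
    and zc: "z = (1 - t) *\<^sub>R u + t *\<^sub>R w" and t: "0 < t" "t < 1" and uz: "u \<noteq> z"
  shows "\<exists>F\<in>sides Q. parallel_to (c *\<^sub>R (u - z)) F"
proof -
  have zQ': "z \<in> Q" using Nz inQ_iff by simp
  have zni: "z \<notin> interior Q" using Nz interior_N by fastforce
  have clQ: "closure Q = Q" using cpt compact_imp_closed closure_closed by blast
  have riQ: "rel_interior Q = interior Q" using zi by (intro rel_interior_nonempty_interior) auto
  obtain a :: pt where a: "a \<noteq> 0" "\<And>y. y \<in> Q \<Longrightarrow> a \<bullet> z \<le> a \<bullet> y"
    using supporting_hyperplane_relative_frontier[OF cvx, of z] zQ' zni clQ riQ by metis
  define b where "b = - a"
  have b0: "b \<noteq> 0" using a by (simp add: b_def)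
  have ble: "\<And>y. y \<in> Q \<Longrightarrow> b \<bullet> y \<le> b \<bullet> z" using a by (simp add: b_def)
  have bu: "b \<bullet> u \<le> b \<bullet> z" and bw: "b \<bullet> w \<le> b \<bullet> z" using ble u w by auto
  have bz: "b \<bullet> z = (1 - t) * (b \<bullet> u) + t * (b \<bullet> w)" using zc by (simp add: inner_add_right)
  have "b \<bullet> u = b \<bullet> z"
  proof (rule ccontr)
    assume "b \<bullet> u \<noteq> b \<bullet> z"
    then have "b \<bullet> u < b \<bullet> z" using bu by simp
    then have "(1 - t) * (b \<bullet> u) < (1 - t) * (b \<bullet> z)" using t by simp
    moreover have "t * (b \<bullet> w) \<le> t * (b \<bullet> z)" using t bw by simp
    ultimately show False using bz by (simp add: algebra_simps)
  qed
  define F where "F = Q \<inter> {y. b \<bullet> y = b \<bullet> z}"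
  have Fface: "F face_of Q" unfolding F_def using cvx ble by (rule face_of_Int_supporting_hyperplane_le)
  have uF: "u \<in> F" and zF: "z \<in> F" using u zQ' \<open>b \<bullet> u = b \<bullet> z\<close> by (auto simp: F_def)
  have "aff_dim F \<le> aff_dim {y. b \<bullet> y = b \<bullet> z}" by (rule aff_dim_subset) (auto simp: F_def)
  also have "\<dots> = 1" using b0 by simp
  finally have le1: "aff_dim F \<le> 1" .
  have "aff_dim F \<noteq> 0" using uF zF uz aff_dim_eq_0[of F] by auto
  moreover have "aff_dim F \<noteq> -1" using uF aff_dim_empty[of F] by auto
  moreover have "aff_dim F \<ge> -1" by (rule aff_dim_geq)
  ultimately have "aff_dim F = 1" using le1 by linarith
  then have "F \<in> sides Q" using Fface by (simp add: sides_def)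
  moreover have "parallel_to (c *\<^sub>R (u - z)) F"
    unfolding parallel_to_def
  proof (intro ballI)
    fix p q assume "p \<in> F" "q \<in> F"
    then have "{0, c *\<^sub>R (u - z), q - p} \<subseteq> {v. b \<bullet> v = 0}"
      using \<open>b \<bullet> u = b \<bullet> z\<close> by (auto simp: F_def inner_diff_right)
    then have "aff_dim {0, c *\<^sub>R (u - z), q - p} \<le> aff_dim {v. b \<bullet> v = 0}" by (rule aff_dim_subset)
    also have "\<dots> = 1" using b0 by simp
    finally show "collinear {0, c *\<^sub>R (u - z), q - p}" by (simp add: collinear_aff_dim)
  qed
  ultimately show ?thesis by blast
qed

end



context shape begin

lemma dQ_line: "0 \<le> t \<Longrightarrow> dQ Q p (p + t *\<^sub>R (x - p)) = t * dQ Q p x"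
  by (simp add: dQ_shift N_scale)

lemma core:
  assumes fS: "finite S" and RS: "R \<subseteq> S" and Rne: "R \<noteq> {}" and pS: "p \<notin> S"
    and hyp: "\<forall>q\<in>S. conflicts_set Q S p (vcell Q S q) \<longrightarrow> q \<in> R"
    and gp: "\<forall>q\<in>R. \<forall>F\<in>sides Q. \<not> parallel_to (q - p) F"
    and c: "dQ Q p x \<le> D R x"
  shows "\<forall>s\<in>S. dQ Q s x \<le> D R x \<longrightarrow> s \<in> R"
proof -
  have fR: "finite R" using fS RS finite_subset by blast
  have Sne: "S \<noteq> {}" using Rne RS by blast
  define lam where "lam = dQ Q p x"
  have key: "lam \<le> D S x"
  proof (rule ccontr)
    assume "\<not> lam \<le> D S x"
    then have lt: "D S x < lam" by simp
    have DS0: "D S x \<ge> 0" using D_ge0 fS Sne by blast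
    have lp: "lam > 0" using lt DS0 by simp
    define y where "y t = p + t *\<^sub>R (x - p)" for t :: real
    define g where "g t = dQ Q p (y t) - D S (y t)" for t
    have gc: "continuous_on {0..1} g"
    proof -
      have c1: "continuous_on {0..1} (\<lambda>t. dQ Q p (y t))"
        unfolding y_def by (rule continuous_on_compose2[OF dQ_cont[of UNIV p]]) (auto intro!: continuous_intros)
      have c2: "continuous_on {0..1} (\<lambda>t. D S (y t))"
        unfolding y_def by (rule continuous_on_compose2[OF D_cont[OF fS Sne, of UNIV]]) (auto intro!: continuous_intros)
      show ?thesis unfolding g_def using c1 c2 by (intro continuous_intros)
    qed
    have "D S p > 0"
    proof -
      obtain s where s: "s \<in> S" "dQ Q s p = D S p" using D_att fS Sne by blast
      have "s \<noteq> p" using s pS by auto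
      then have "dQ Q s p \<noteq> 0" using dQ_self by simp
      then show ?thesis using s dQ_ge0[of s p] by simp
    qed
    then have g0: "g 0 \<le> 0" using dQ_self[of p p] by (simp add: g_def y_def)
    have g1: "0 \<le> g 1" using lt by (simp add: g_def y_def lam_def)
    obtain t where t: "0 \<le> t" "t \<le> 1" "g t = 0" using IVT'[of g 0 0 1, OF g0 g1 _ gc] by auto
    have gt: "g t = t * lam - D S (y t)" using t by (simp add: g_def y_def dQ_line lam_def)
    have t0: "t \<noteq> 0" using t gt \<open>D S p > 0\<close> by (auto simp: y_def)
    have t1: "t \<noteq> 1" using t gt lt by (auto simp: y_def)
    have tp: "0 < t" "t < 1" using t t0 t1 by auto
    obtain s0 where s0: "s0 \<in> S" "dQ Q s0 (y t) = D S (y t)" using D_att fS Sne by blast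
    have ds0: "dQ Q s0 (y t) = t * lam" using s0 t gt by simp
    have "y t \<in> vcell Q S s0" using vcell_iff[OF fS Sne] s0 by simp
    moreover have "conflicts Q S p (y t)" using conflicts_iff[OF fS Sne] t gt
      by (simp add: dQ_line y_def lam_def)
    ultimately have "conflicts_set Q S p (vcell Q S s0)" by (auto simp: conflicts_set_def)
    then have s0R: "s0 \<in> R" using hyp s0 by blast
    have xy: "x - y t = (1 - t) *\<^sub>R (x - p)" by (simp add: y_def algebra_simps)
    have Nxy: "N (x - y t) = (1 - t) * lam" using tp by (simp add: xy N_scale lam_def dQ_shift)
    have Nys: "N (y t - s0) = t * lam" using ds0 by (simp add: dQ_shift)
    have "dQ Q s0 x = N ((x - y t) + (y t - s0))" by (simp add: dQ_shift)
    also have "\<dots> \<le> (1 - t) * lam + t * lam" using N_triangle Nxy Nys by metis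
    finally have le: "dQ Q s0 x \<le> lam" by (simp add: algebra_simps)
    have ge: "lam \<le> dQ Q s0 x" using c D_le[OF fR s0R, of x] by (simp add: lam_def)
    have eqs: "N (x - s0) = lam" using le ge by (simp add: dQ_shift)
    define u where "u = (1 / lam) *\<^sub>R (x - p)"
    define w where "w = (1 / (t * lam)) *\<^sub>R (y t - s0)"
    define z where "z = (1 / lam) *\<^sub>R (x - s0)"
    have Nu: "N u = 1" using lp by (simp add: u_def N_scale lam_def dQ_shift)
    have Nw: "N w = 1" using lp tp by (simp add: w_def N_scale Nys)
    have Nz: "N z = 1" using lp by (simp add: z_def N_scale eqs)
    have zc: "z = (1 - t) *\<^sub>R u + t *\<^sub>R w"
    proof -
      have eq: "x - s0 = (1 - t) *\<^sub>R (x - p) + (y t - s0)" using xy by (simp add: algebra_simps)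
      have "z = (1/lam) *\<^sub>R ((1 - t) *\<^sub>R (x - p) + (y t - s0))"
        unfolding z_def by (simp only: eq)
      then have "z = (1/lam) *\<^sub>R ((1 - t) *\<^sub>R (x - p)) + (1/lam) *\<^sub>R (y t - s0)"
        by (simp only: scaleR_add_right)
      moreover have "t *\<^sub>R w = (1/lam) *\<^sub>R (y t - s0)" using tp lp by (simp add: w_def)
      ultimately show ?thesis by (simp add: u_def)
    qed
    have ps0: "p \<noteq> s0" using pS s0 by auto
    have uz: "u \<noteq> z"
    proof
      assume "u = z"
      then have "lam *\<^sub>R u = lam *\<^sub>R z" by simp
      then have "x - p = x - s0" using lp by (simp add: u_def z_def)
      then show False using ps0 by simp
    qed
    have diff: "s0 - p = lam *\<^sub>R (u - z)" using lp by (simp add: u_def z_def algebra_simps)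
    obtain F where "F \<in> sides Q" "parallel_to (lam *\<^sub>R (u - z)) F"
      using face_par[of u w z t lam] Nu Nw Nz zc tp uz inQ_iff by auto
    then show False using gp s0R diff by metis
  qed
  obtain s1 where s1: "s1 \<in> S" "dQ Q s1 x = D S x" using D_att fS Sne by blast
  have confS: "conflicts Q S p x" using conflicts_iff[OF fS Sne] key by (simp add: lam_def)
  show ?thesis
  proof (intro ballI impI)
    fix s assume s: "s \<in> S" "dQ Q s x \<le> D R x"
    have "x \<in> vcell Q S s1" using vcell_iff[OF fS Sne] s1 by simp
    then have "s1 \<in> R" using hyp s1 confS by (auto simp: conflicts_set_def)
    then have "D R x \<le> D S x" using D_le[OF fR] s1 by metis
    then have "x \<in> vcell Q S s" using vcell_iff[OF fS Sne] s by simp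
    then show "s \<in> R" using hyp s confS by (auto simp: conflicts_set_def)
  qed
qed

end



context shape begin

lemma transfer:
  assumes fS: "finite S" and RS: "R \<subseteq> S" and Rne: "R \<noteq> {}"
    and strict: "\<forall>s\<in>S - R. D R x < dQ Q s x"
  shows "x \<in> vor_features Q R \<Longrightarrow> x \<in> vor_features Q S"
proof -
  assume xf: "x \<in> vor_features Q R"
  have fR: "finite R" using fS RS finite_subset by blast
  have Sne: "S \<noteq> {}" using Rne RS by blast
  define U where "U = (\<Inter>s\<in>S - R. {y. D R y < dQ Q s y})"
  have "open U" unfolding U_def using fS
    by (intro open_INT ballI open_Collect_less D_cont[OF fR Rne] dQ_cont) auto
  moreover have "x \<in> U" using strict by (auto simp: U_def)
  ultimately obtain e where e: "e > 0" "ball x e \<subseteq> U" using open_contains_ball by blast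
  have DSR: "D S y = D R y" if "y \<in> ball x e" for y
  proof -
    have yU: "\<forall>s\<in>S - R. D R y < dQ Q s y" using e that by (auto simp: U_def)
    obtain r where r: "r \<in> R" "dQ Q r y = D R y" using D_att fR Rne by blast
    have le: "D S y \<le> D R y" using D_le[OF fS] r RS by (metis subsetD)
    obtain s where s: "s \<in> S" "dQ Q s y = D S y" using D_att fS Sne by blast
    show ?thesis
    proof (cases "s \<in> R")
      case True then show ?thesis using D_le[OF fR True, of y] s le by simp
    next
      case False then show ?thesis using yU s le by force
    qed
  qed
  have sitesEq: "sites_at Q S y = sites_at Q R y" if y: "y \<in> ball x e" for y
  proof -
    have yU: "\<forall>s\<in>S - R. D R y < dQ Q s y" using e that by (auto simp: U_def)
    show ?thesis unfolding sites_at_def using vcell_iff[OF fS Sne] vcell_iff[OF fR Rne] DSR[OF y] yU RS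
      by force
  qed
  have cellEq: "vcell Q S q \<inter> ball x e = vcell Q R q \<inter> ball x e" for q
    using vcell_iff[OF fS Sne] vcell_iff[OF fR Rne] DSR by auto
  have x0: "x \<in> ball x e" using e by simp
  show "x \<in> vor_features Q S"
    using xf unfolding vor_features_def
  proof (elim CollectE disjE)
    assume "voronoi_vertex Q R x"
    then show "x \<in> {x. voronoi_vertex Q S x \<or> voronoi_edge_bend Q S x}"
      using sitesEq[OF x0] by (simp add: voronoi_vertex_def)
  next
    assume "voronoi_edge_bend Q R x"
    then obtain a b where ab: "a \<noteq> b" "sites_at Q R x = {a, b}"
      and nl: "\<not> (\<exists>v e. v \<noteq> 0 \<and> e > 0 \<and>
              vcell Q R a \<inter> vcell Q R b \<inter> ball x e = {x + t *\<^sub>R v | t. True} \<inter> ball x e)"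
      unfolding voronoi_edge_bend_def by blast
    have "\<not> (\<exists>v e. v \<noteq> 0 \<and> e > 0 \<and>
              vcell Q S a \<inter> vcell Q S b \<inter> ball x e = {x + t *\<^sub>R v | t. True} \<inter> ball x e)"
    proof
      assume "\<exists>v e. v \<noteq> 0 \<and> e > 0 \<and>
              vcell Q S a \<inter> vcell Q S b \<inter> ball x e = {x + t *\<^sub>R v | t. True} \<inter> ball x e"
      then obtain v e' where v: "v \<noteq> 0" "e' > 0"
        "vcell Q S a \<inter> vcell Q S b \<inter> ball x e' = {x + t *\<^sub>R v | t. True} \<inter> ball x e'" by blast
      define e2 where "e2 = min e e'"
      have e2: "e2 > 0" using e v by (simp add: e2_def)
      have b1: "ball x e2 \<subseteq> ball x e" "ball x e2 \<subseteq> ball x e'" by (auto simp: e2_def)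
      have "vcell Q R a \<inter> vcell Q R b \<inter> ball x e2 = vcell Q S a \<inter> vcell Q S b \<inter> ball x e2"
        using cellEq[of a] cellEq[of b] b1 by blast
      also have "\<dots> = (vcell Q S a \<inter> vcell Q S b \<inter> ball x e') \<inter> ball x e2" using b1 by blast
      also have "\<dots> = {x + t *\<^sub>R v | t. True} \<inter> ball x e2" using v(3) b1 by blast
      finally show False using nl v e2 by blast
    qed
    then have "voronoi_edge_bend Q S x"
      unfolding voronoi_edge_bend_def using ab sitesEq[OF x0] by blast
    then show "x \<in> {x. voronoi_vertex Q S x \<or> voronoi_edge_bend Q S x}" by simp
  qed
qed

end

theorem mainTheorem6:
  fixes Q S I R :: "pt set"
  assumes "convex_polygon_shape Q"
    and "finite S" and "finite I" and "S \<inter> I = {}"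
    and "general_position Q (S \<union> I)"
    and "R \<subseteq> S"
    and "\<forall>q\<in>S. (\<exists>p\<in>I. conflicts_set Q S p (vcell Q S q)) \<longrightarrow> q \<in> R"
  shows "{x \<in> vor_features Q R. \<exists>p\<in>I. conflicts Q R p x}
           \<subseteq> (\<Union>p\<in>I. {x \<in> vor_features Q S. conflicts Q S p x})"
proof
  fix x assume "x \<in> {x \<in> vor_features Q R. \<exists>p\<in>I. conflicts Q R p x}"
  then obtain p where xf: "x \<in> vor_features Q R" and pI: "p \<in> I" and cR: "conflicts Q R p x" by blast
  interpret shape Q
    using assms(1) by unfold_locales
      (auto simp: convex_polygon_shape_def polytope_imp_convex polytope_imp_compact)
  have fS: "finite S" by (rule assms(2))
  have fR: "finite R" using assms(2,6) finite_subset by blast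
  have Rne: "R \<noteq> {}"
  proof
    assume "R = {}"
    then have "sites_at Q R x = {}" by (simp add: sites_at_def)
    then show False using xf by (auto simp: vor_features_def voronoi_vertex_def voronoi_edge_bend_def)
  qed
  have Sne: "S \<noteq> {}" using Rne assms(6) by blast
  have pS: "p \<notin> S" using pI assms(4) by blast
  have hyp: "\<forall>q\<in>S. conflicts_set Q S p (vcell Q S q) \<longrightarrow> q \<in> R" using assms(7) pI by blast
  have gp: "\<forall>q\<in>R. \<forall>F\<in>sides Q. \<not> parallel_to (q - p) F"
  proof (intro ballI)
    fix q F assume q: "q \<in> R" and F: "F \<in> sides Q"
    have "q \<in> S \<union> I" "p \<in> S \<union> I" "p \<noteq> q" using q assms(6) pI pS by auto
    then show "\<not> parallel_to (q - p) F" using assms(5) F unfolding general_position_def by blast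
  qed
  have c: "dQ Q p x \<le> D R x" using cR conflicts_iff[OF fR Rne] by simp
  have cc: "\<forall>s\<in>S. dQ Q s x \<le> D R x \<longrightarrow> s \<in> R" by (rule core[OF fS assms(6) Rne pS hyp gp c])
  then have strict: "\<forall>s\<in>S - R. D R x < dQ Q s x" by force
  have xS: "x \<in> vor_features Q S" by (rule transfer[OF fS assms(6) Rne strict xf])
  have "D S x = D R x"
  proof -
    obtain s where s: "s \<in> S" "dQ Q s x = D S x" using D_att fS Sne by blast
    obtain r where r: "r \<in> R" "dQ Q r x = D R x" using D_att fR Rne by blast
    have "D S x \<le> D R x" using D_le[OF fS, of r x] r assms(6) by auto
    then have "s \<in> R" using cc s by simp
    then show ?thesis using D_le[OF fR, of s x] s \<open>D S x \<le> D R x\<close> by simp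
  qed
  then have "conflicts Q S p x" using c conflicts_iff[OF fS Sne] by simp
  then show "x \<in> (\<Union>p\<in>I. {x \<in> vor_features Q S. conflicts Q S p x})" using xS pI by blast
qed


end
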